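(* Let $\Lambda$ be a cohomology algebra of $b^+=1$ type with $2\tilde\chi(\Lambda)+3\sigma(\Lambda)\ge0$ falling into Case (1), (3) or (5) below, and let $A=aF+bB$ be a reduced class with $A\cdot A\ge0$. Then: Case (1): $h(A)<0$ iff $a>1$ and $b=0$; $h(A)=0$ iff $a\ge b=1$, or $(a,b)\in\{(1,0),(0,0)\}$. Case (3): $h(A)<0$ iff $a>1$ and $b=0$; $h(A)=0$ iff $(a,b)\in\{(1,0),(0,0)\}$. Case (5): $h(A)<0$ iff $a>1$ and $b=0$; $h(A)=0$ iff $(a,b)\in\{(1,0),(0,0)\}$. In all other cases $h(A)>0$. Moreover, in Case (2) every nonzero $A$ with $A\cdot A\ge0$ has $h(A)>0$.
   Context: Notation: $\Lambda$ a cohomology algebra (graded commutative algebra over $\mathbb{Z}$, free of finite rank in each degree, $p:\Lambda^4\cong\mathbb{Z}$ with perfect pairings); $\Gamma(x,y)=x\cdot y=p(xy)$ on $\Lambda^2$, signature $\sigma$; $I_T\subseteq\Lambda^2$ generated by products of elements of $\Lambda^1$; $\tilde b_1=b_1-\mathrm{rank}\{x\in\Lambda^1:x\Lambda^1=0\}$; $\tilde\chi=2+b_2-2\tilde b_1$. Characteristic: $c\cdot A\equiv A\cdot A\pmod2$ for all $A$. Adjunction class: characteristic $c$ with (I) $c\cdot c>\sigma$, or (II) $c\cdot c\ge2\tilde\chi+3\sigma$ and, if $I_T\ne0$, $c\cdot x\ne0$ for some $x\in I_T$. $h_c(A)=1+\frac{A\cdot A-|c\cdot A|}{2}$ for $A\ne0$,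 $h_c(0)=0$; $h(A)=\max_c h_c(A)$. $U=\begin{pmatrix}0&1\\1&0\end{pmatrix}$, $E$ the positive definite $E_8$ form. (1) $I_T=0$, $\Gamma\cong U$; basis $\{F,B\}$, $F\cdot F=B\cdot B=0$, $F\cdot B=1$; reduced: $aF+bB$, $a\ge|b|\ge0$. (2) $I_T=0$, $\Gamma\cong U\oplus(-E)$. (3) $\tilde b_1=2$, $\Gamma\cong U$; $F$ generates $I_T$, basis $\{F,B\}$, $F\cdot F=B\cdot B=0$, $F\cdot B=1$; reduced: $aF+bB$ with $a>0$, or $a=0,b\ge0$. (5) $\tilde b_1=2$, $\Gamma\cong\langle1\rangle\oplus\langle-1\rangle$; $F$ generates $I_T$, basis $\{F,B\}$, $F\cdot F=0$, $F\cdot B=B\cdot B=1$; reduced: $aF+bB$ with $a>0$, or $a=0,b\ge0$. *)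

theory Defs
  imports Complex_Main
begin

text \<open>
A cohomology algebra \<Lambda> = \<Lambda>^0 + ... + \<Lambda>^4 over the integers, each \<Lambda>^k free of
finite rank r k, is encoded by the ranks r :: nat \<Rightarrow> nat and a product
mu i j : \<Lambda>^i \<times> \<Lambda>^j \<rightarrow> \<Lambda>^(i+j) (for i + j \<le> 4).
An element of \<Lambda>^k is a coordinate vector nat \<Rightarrow> int supported on {0..<r k}.
The orientation p : \<Lambda>^4 \<cong> Z is the (single) coordinate 0 of \<Lambda>^4.
\<close>

type_synonym ivec = "nat \<Rightarrow> int"
type_synonym cprod = "nat \<Rightarrow> nat \<Rightarrow> ivec \<Rightarrow> ivec \<Rightarrow> ivec"

definition vzero :: ivec where "vzero = (\<lambda>_. 0)"
definition vadd :: "ivec \<Rightarrow> ivec \<Rightarrow> ivec" where "vadd x y = (\<lambda>k. x k + y k)"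
definition smul :: "int \<Rightarrow> ivec \<Rightarrow> ivec" where "smul c x = (\<lambda>k. c * x k)"
definition unitv :: "nat \<Rightarrow> ivec" where "unitv j = (\<lambda>i. if i = j then 1 else 0)"

definition Deg :: "(nat \<Rightarrow> nat) \<Rightarrow> nat \<Rightarrow> ivec set" where
  "Deg r k = {x. \<forall>i\<ge>r k. x i = 0}"

definition ca_pair :: "cprod \<Rightarrow> nat \<Rightarrow> ivec \<Rightarrow> ivec \<Rightarrow> int" where
  "ca_pair mu k x y = mu k (4 - k) x y 0"

definition cohomology_algebra :: "(nat \<Rightarrow> nat) \<Rightarrow> cprod \<Rightarrow> bool" where
  "cohomology_algebra r mu \<longleftrightarrow>
     r 4 = 1 \<and>
     (\<forall>i j x y. i + j \<le> 4 \<longrightarrow> x \<in> Deg r i \<longrightarrow> y \<in> Deg r j \<longrightarrow> mu i j x y \<in> Deg r (i + j)) \<and>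
     (\<forall>i j x y z. i + j \<le> 4 \<longrightarrow> x \<in> Deg r i \<longrightarrow> y \<in> Deg r i \<longrightarrow> z \<in> Deg r j \<longrightarrow>
         mu i j (vadd x y) z = vadd (mu i j x z) (mu i j y z)) \<and>
     (\<forall>i j x y z. i + j \<le> 4 \<longrightarrow> x \<in> Deg r i \<longrightarrow> y \<in> Deg r j \<longrightarrow> z \<in> Deg r j \<longrightarrow>
         mu i j x (vadd y z) = vadd (mu i j x y) (mu i j x z)) \<and>
     (\<forall>i j k x y z. i + j + k \<le> 4 \<longrightarrow> x \<in> Deg r i \<longrightarrow> y \<in> Deg r j \<longrightarrow> z \<in> Deg r k \<longrightarrow>
         mu (i + j) k (mu i j x y) z = mu i (j + k) x (mu j k y z)) \<and>
     (\<forall>i j x y. i + j \<le> 4 \<longrightarrow> x \<in> Deg r i \<longrightarrow> y \<in> Deg r j \<longrightarrow>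
         mu i j x y = smul ((-1) ^ (i * j)) (mu j i y x)) \<and>
     unitv 0 \<in> Deg r 0 \<and>
     (\<forall>k x. k \<le> 4 \<longrightarrow> x \<in> Deg r k \<longrightarrow> mu 0 k (unitv 0) x = x) \<and>
     (\<forall>k\<le>4. bij_betw (\<lambda>x j. if j < r (4 - k) then ca_pair mu k x (unitv j) else 0)
                 (Deg r k) (Deg r (4 - k)))"

definition ca_Gamma :: "cprod \<Rightarrow> ivec \<Rightarrow> ivec \<Rightarrow> int" where
  "ca_Gamma mu x y = mu 2 2 x y 0"

definition posdef_gram :: "nat \<Rightarrow> (nat \<Rightarrow> nat \<Rightarrow> real) \<Rightarrow> bool" where
  "posdef_gram n G \<longleftrightarrow>
     (\<forall>x :: nat \<Rightarrow> real. (\<exists>i<n. x i \<noteq> 0) \<longrightarrow> (\<Sum>i<n. \<Sum>j<n. x i * G i j * x j) > 0)"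

text \<open>b^+ (resp. b^-): maximal dimension of a subspace on which \<Gamma> is positive
  (resp. negative) definite; it suffices to range over integral vectors.\<close>
definition ca_bplus :: "(nat \<Rightarrow> nat) \<Rightarrow> cprod \<Rightarrow> nat" where
  "ca_bplus r mu = Max {n. \<exists>v. (\<forall>i<n. v i \<in> Deg r 2) \<and>
       posdef_gram n (\<lambda>i j. real_of_int (ca_Gamma mu (v i) (v j)))}"

definition ca_bminus :: "(nat \<Rightarrow> nat) \<Rightarrow> cprod \<Rightarrow> nat" where
  "ca_bminus r mu = Max {n. \<exists>v. (\<forall>i<n. v i \<in> Deg r 2) \<and>
       posdef_gram n (\<lambda>i j. - real_of_int (ca_Gamma mu (v i) (v j)))}"

definition ca_sigma :: "(nat \<Rightarrow> nat) \<Rightarrow> cprod \<Rightarrow> int" where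
  "ca_sigma r mu = int (ca_bplus r mu) - int (ca_bminus r mu)"

text \<open>I_T: subgroup of \<Lambda>^2 generated by products of elements of \<Lambda>^1
  (by bilinearity, the sums of such products)\<close>
definition ca_IT :: "(nat \<Rightarrow> nat) \<Rightarrow> cprod \<Rightarrow> ivec set" where
  "ca_IT r mu = {(\<lambda>k. \<Sum>i<n. mu 1 1 (u i) (w i) k) | (n::nat) u w.
                    \<forall>i<n. u i \<in> Deg r 1 \<and> w i \<in> Deg r 1}"

definition lin_indep_Z :: "ivec set \<Rightarrow> bool" where
  "lin_indep_Z T \<longleftrightarrow> (\<forall>c :: ivec \<Rightarrow> int. (\<forall>k. (\<Sum>v\<in>T. c v * v k) = 0) \<longrightarrow> (\<forall>v\<in>T. c v = 0))"

definition zrank :: "ivec set \<Rightarrow> nat" where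
  "zrank S = Max {card T | T. T \<subseteq> S \<and> finite T \<and> lin_indep_Z T}"

definition ca_b1tilde :: "(nat \<Rightarrow> nat) \<Rightarrow> cprod \<Rightarrow> int" where
  "ca_b1tilde r mu = int (r 1) -
     int (zrank {x \<in> Deg r 1. \<forall>y\<in>Deg r 1. mu 1 1 x y = vzero})"

definition ca_chitilde :: "(nat \<Rightarrow> nat) \<Rightarrow> cprod \<Rightarrow> int" where
  "ca_chitilde r mu = 2 + int (r 2) - 2 * ca_b1tilde r mu"

definition characteristic :: "(nat \<Rightarrow> nat) \<Rightarrow> cprod \<Rightarrow> ivec \<Rightarrow> bool" where
  "characteristic r mu c \<longleftrightarrow> c \<in> Deg r 2 \<and>
     (\<forall>A\<in>Deg r 2. ca_Gamma mu c A mod 2 = ca_Gamma mu A A mod 2)"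

definition adjunction_class :: "(nat \<Rightarrow> nat) \<Rightarrow> cprod \<Rightarrow> ivec \<Rightarrow> bool" where
  "adjunction_class r mu c \<longleftrightarrow> characteristic r mu c \<and>
     (ca_Gamma mu c c > ca_sigma r mu \<or>
      (ca_Gamma mu c c \<ge> 2 * ca_chitilde r mu + 3 * ca_sigma r mu \<and>
       (ca_IT r mu \<noteq> {vzero} \<longrightarrow> (\<exists>x\<in>ca_IT r mu. ca_Gamma mu c x \<noteq> 0))))"

definition h_c :: "cprod \<Rightarrow> ivec \<Rightarrow> ivec \<Rightarrow> int" where
  "h_c mu c A = (if A = vzero then 0
                 else 1 + (ca_Gamma mu A A - \<bar>ca_Gamma mu c A\<bar>) div 2)"

definition h_fun :: "(nat \<Rightarrow> nat) \<Rightarrow> cprod \<Rightarrow> ivec \<Rightarrow> int" where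
  "h_fun r mu A = (GREATEST v. \<exists>c. adjunction_class r mu c \<and> v = h_c mu c A)"

definition basis_with_gram :: "(nat \<Rightarrow> nat) \<Rightarrow> cprod \<Rightarrow> nat \<Rightarrow> (nat \<Rightarrow> ivec) \<Rightarrow> (nat \<Rightarrow> nat \<Rightarrow> int) \<Rightarrow> bool" where
  "basis_with_gram r mu n e G \<longleftrightarrow>
     (\<forall>i<n. e i \<in> Deg r 2) \<and>
     (\<forall>A\<in>Deg r 2. \<exists>!a. (\<forall>i\<ge>n. a i = 0) \<and> A = (\<lambda>k. \<Sum>i<n. a i * e i k)) \<and>
     (\<forall>i<n. \<forall>j<n. ca_Gamma mu (e i) (e j) = G i j)"

definition two_basis :: "ivec \<Rightarrow> ivec \<Rightarrow> nat \<Rightarrow> ivec" where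
  "two_basis F B = (\<lambda>i. if i = 0 then F else B)"

definition gram2 :: "int \<Rightarrow> int \<Rightarrow> int \<Rightarrow> nat \<Rightarrow> nat \<Rightarrow> int" where
  "gram2 f fb bb = (\<lambda>i j. if i = 0 \<and> j = 0 then f else if i = 1 \<and> j = 1 then bb else fb)"

definition E8_adj :: "nat \<Rightarrow> nat \<Rightarrow> bool" where
  "E8_adj i j \<longleftrightarrow> (i < 7 \<and> j < 7 \<and> (i = j + 1 \<or> j = i + 1)) \<or> {i, j} = {4, 7}"

definition E8 :: "nat \<Rightarrow> nat \<Rightarrow> int" where
  "E8 i j = (if i = j then 2 else if E8_adj i j then -1 else 0)"

definition U_minus_E8 :: "nat \<Rightarrow> nat \<Rightarrow> int" where
  "U_minus_E8 i j = (if i < 2 \<and> j < 2 then (if i = j then 0 else 1)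
                      else if 2 \<le> i \<and> 2 \<le> j then - E8 (i - 2) (j - 2) else 0)"

definition lincomb2 :: "int \<Rightarrow> ivec \<Rightarrow> int \<Rightarrow> ivec \<Rightarrow> ivec" where
  "lincomb2 a F b B = (\<lambda>k. a * F k + b * B k)"

end

theory Submission
  imports Defs
begin

lemma Deg_vadd[simp]: "x \<in> Deg r k \<Longrightarrow> y \<in> Deg r k \<Longrightarrow> vadd x y \<in> Deg r k"
  by (simp add: Deg_def vadd_def)
lemma Deg_smul[simp]: "x \<in> Deg r k \<Longrightarrow> smul c x \<in> Deg r k"
  by (simp add: Deg_def smul_def)
lemma Deg_vzero[simp]: "vzero \<in> Deg r k"
  by (simp add: Deg_def vzero_def)
lemma Deg_sum: "(\<And>i. i < n \<Longrightarrow> e i \<in> Deg r k) \<Longrightarrow> (\<lambda>t. \<Sum>i<n. a i * e i t) \<in> Deg r k"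
  by (simp add: Deg_def)
lemma Deg_lincomb[simp]: "F \<in> Deg r k \<Longrightarrow> B \<in> Deg r k \<Longrightarrow> lincomb2 a F b B \<in> Deg r k"
  by (simp add: Deg_def lincomb2_def)

locale CA =
  fixes r :: "nat \<Rightarrow> nat" and mu :: cprod
  assumes alg: "cohomology_algebra r mu"
begin

abbreviation G where "G \<equiv> ca_Gamma mu"

lemma G_addR: "x \<in> Deg r 2 \<Longrightarrow> y \<in> Deg r 2 \<Longrightarrow> z \<in> Deg r 2 \<Longrightarrow> G x (vadd y z) = G x y + G x z"
proof -
  assume a: "x \<in> Deg r 2" "y \<in> Deg r 2" "z \<in> Deg r 2"
  have "mu 2 2 x (vadd y z) = vadd (mu 2 2 x y) (mu 2 2 x z)"
    using alg a unfolding cohomology_algebra_def by (metis add_2_eq_Suc' numeral_Bit0 numeral_Bit1 one_add_one order_refl)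
  then show ?thesis by (simp add: ca_Gamma_def vadd_def)
qed

lemma G_sym: "x \<in> Deg r 2 \<Longrightarrow> y \<in> Deg r 2 \<Longrightarrow> G x y = G y x"
proof -
  assume a: "x \<in> Deg r 2" "y \<in> Deg r 2"
  have "mu 2 2 x y = smul ((-1) ^ (2*2)) (mu 2 2 y x)"
    using alg a unfolding cohomology_algebra_def by (metis add_2_eq_Suc' numeral_Bit0 numeral_Bit1 one_add_one order_refl)
  then show ?thesis by (simp add: ca_Gamma_def smul_def)
qed

lemma G_addL: "x \<in> Deg r 2 \<Longrightarrow> y \<in> Deg r 2 \<Longrightarrow> z \<in> Deg r 2 \<Longrightarrow> G (vadd y z) x = G y x + G z x"
  using G_addR G_sym by (metis Deg_vadd)

lemma G_zeroR: "x \<in> Deg r 2 \<Longrightarrow> G x vzero = 0"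
proof -
  assume "x \<in> Deg r 2"
  have "vadd vzero vzero = vzero" by (simp add: vadd_def vzero_def)
  then have "G x vzero = G x vzero + G x vzero" using G_addR[of x vzero vzero] \<open>x \<in> Deg r 2\<close> by simp
  then show ?thesis by simp
qed

lemma G_smulR: "x \<in> Deg r 2 \<Longrightarrow> y \<in> Deg r 2 \<Longrightarrow> G x (smul c y) = c * G x y"
proof -
  assume a: "x \<in> Deg r 2" "y \<in> Deg r 2"
  have nat: "G x (smul (int n) y) = int n * G x y" for n
  proof (induction n)
    case 0
    have "smul (int 0) y = vzero" by (simp add: smul_def vzero_def)
    then show ?case using G_zeroR a by simp
  next
    case (Suc n)
    have "smul (int (Suc n)) y = vadd (smul (int n) y) y" by (simp add: smul_def vadd_def algebra_simps)
    then show ?case using G_addR[of x "smul (int n) y" y] a Suc by (simp add: algebra_simps)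
  qed
  have neg: "G x (smul (- int n) y) = - int n * G x y" for n
  proof -
    have "vadd (smul (- int n) y) (smul (int n) y) = vzero" by (simp add: smul_def vadd_def vzero_def)
    then have "G x (smul (- int n) y) + G x (smul (int n) y) = 0"
      using G_addR[of x "smul (- int n) y" "smul (int n) y"] G_zeroR a by simp
    then show ?thesis using nat by simp
  qed
  show ?thesis
  proof (cases "c \<ge> 0")
    case True then show ?thesis using nat[of "nat c"] by simp
  next
    case False then show ?thesis using neg[of "nat (-c)"] by simp
  qed
qed

lemma G_smulL: "x \<in> Deg r 2 \<Longrightarrow> y \<in> Deg r 2 \<Longrightarrow> G (smul c y) x = c * G y x"
  using G_smulR G_sym by (metis Deg_smul)

lemma lincomb2_eq: "lincomb2 a F b B = vadd (smul a F) (smul b B)"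
  by (simp add: lincomb2_def vadd_def smul_def)

lemma G_lincombR: "x \<in> Deg r 2 \<Longrightarrow> F \<in> Deg r 2 \<Longrightarrow> B \<in> Deg r 2 \<Longrightarrow>
   G x (lincomb2 a F b B) = a * G x F + b * G x B"
  by (simp add: lincomb2_eq G_addR G_smulR)

lemma G_lincombL: "x \<in> Deg r 2 \<Longrightarrow> F \<in> Deg r 2 \<Longrightarrow> B \<in> Deg r 2 \<Longrightarrow>
   G (lincomb2 a F b B) x = a * G F x + b * G B x"
  using G_lincombR G_sym by (metis Deg_lincomb)

lemma G_lincomb2: "F \<in> Deg r 2 \<Longrightarrow> B \<in> Deg r 2 \<Longrightarrow>
   G (lincomb2 a F b B) (lincomb2 a' F b' B) = a*a'*G F F + (a*b' + b*a') * G F B + b*b'*G B B"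
  using G_lincombR G_lincombL G_sym by (simp add: algebra_simps)

lemma G_sumR: "x \<in> Deg r 2 \<Longrightarrow> (\<And>i. i < (n::nat) \<Longrightarrow> e i \<in> Deg r 2) \<Longrightarrow>
   G x (\<lambda>t. \<Sum>i<n. a i * e i t) = (\<Sum>i<n. a i * G x (e i))"
proof (induction n)
  case 0
  have "(\<lambda>t. \<Sum>i<0. a i * e i t) = vzero" by (simp add: vzero_def)
  then show ?case using G_zeroR 0 by simp
next
  case (Suc n)
  have eq: "(\<lambda>t. \<Sum>i<Suc n. a i * e i t) = vadd (\<lambda>t. \<Sum>i<n. a i * e i t) (smul (a n) (e n))"
    by (simp add: vadd_def smul_def)
  have d1: "(\<lambda>t. \<Sum>i<n. a i * e i t) \<in> Deg r 2" using Suc.prems by (intro Deg_sum) auto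
  have d2: "e n \<in> Deg r 2" using Suc.prems by auto
  have IH: "G x (\<lambda>t. \<Sum>i<n. a i * e i t) = (\<Sum>i<n. a i * G x (e i))"
    by (rule Suc.IH) (use Suc.prems in auto)
  have "G x (\<lambda>t. \<Sum>i<Suc n. a i * e i t) = G x (\<lambda>t. \<Sum>i<n. a i * e i t) + G x (smul (a n) (e n))"
    unfolding eq by (rule G_addR[OF Suc.prems(1) d1 Deg_smul[OF d2]])
  also have "G x (smul (a n) (e n)) = a n * G x (e n)" by (rule G_smulR[OF Suc.prems(1) d2])
  finally show ?case using IH by simp
qed

lemma G_sumL: "x \<in> Deg r 2 \<Longrightarrow> (\<And>i. i < (n::nat) \<Longrightarrow> e i \<in> Deg r 2) \<Longrightarrow>
   G (\<lambda>t. \<Sum>i<n. a i * e i t) x = (\<Sum>i<n. a i * G (e i) x)"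
proof -
  assume a: "x \<in> Deg r 2" "\<And>i. i < (n::nat) \<Longrightarrow> e i \<in> Deg r 2"
  have "G (\<lambda>t. \<Sum>i<n. a i * e i t) x = G x (\<lambda>t. \<Sum>i<n. a i * e i t)"
    using G_sym[OF Deg_sum a(1)] a(2) by blast
  also have "\<dots> = (\<Sum>i<n. a i * G x (e i))" using G_sumR a by blast
  also have "\<dots> = (\<Sum>i<n. a i * G (e i) x)" using G_sym a by (intro sum.cong) auto
  finally show ?thesis .
qed

lemma G_sum2: "(\<And>i. i < (n::nat) \<Longrightarrow> e i \<in> Deg r 2) \<Longrightarrow>
   G (\<lambda>t. \<Sum>i<n. a i * e i t) (\<lambda>t. \<Sum>i<n. b i * e i t) = (\<Sum>i<n. \<Sum>j<n. a i * b j * G (e i) (e j))"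
proof -
  assume a: "\<And>i. i < (n::nat) \<Longrightarrow> e i \<in> Deg r 2"
  have d: "(\<lambda>t. \<Sum>i<n. b i * e i t) \<in> Deg r 2" using a by (rule Deg_sum)
  have "G (\<lambda>t. \<Sum>i<n. a i * e i t) (\<lambda>t. \<Sum>i<n. b i * e i t) = (\<Sum>i<n. a i * G (e i) (\<lambda>t. \<Sum>i<n. b i * e i t))"
    by (rule G_sumL[OF d a])
  also have "\<dots> = (\<Sum>i<n. a i * (\<Sum>j<n. b j * G (e i) (e j)))"
    using G_sumR[OF a a] by (intro sum.cong) auto
  also have "\<dots> = (\<Sum>i<n. \<Sum>j<n. a i * b j * G (e i) (e j))"
    by (simp add: sum_distrib_left mult.assoc)
  finally show ?thesis .
qed

end

lemma greatest_int_bounds: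
  fixes P :: "int \<Rightarrow> bool"
  assumes p0: "P v0" and bd: "\<And>v. P v \<Longrightarrow> v \<le> M"
  shows "v0 \<le> (GREATEST v. P v) \<and> (GREATEST v. P v) \<le> M"
proof -
  let ?S = "{v. P v \<and> v0 \<le> v}"
  have fin: "finite ?S" by (rule finite_subset[of _ "{v0..M}"]) (auto simp: bd)
  have ne: "v0 \<in> ?S" using p0 by simp
  define m where "m = Max ?S"
  have mS: "m \<in> ?S" unfolding m_def using fin ne by (intro Max_in) auto
  have ge: "\<And>y. P y \<Longrightarrow> y \<le> m"
  proof -
    fix y assume "P y"
    show "y \<le> m"
    proof (cases "v0 \<le> y")
      case True then show ?thesis unfolding m_def using fin \<open>P y\<close> by (intro Max_ge) auto
    next
      case False then show ?thesis using mS by auto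
    qed
  qed
  have "(GREATEST v. P v) = m" using mS ge by (intro Greatest_equality) auto
  then show ?thesis using mS bd by auto
qed

lemma h_fun_bounds:
  assumes "adjunction_class r mu c0"
    and "\<And>c. adjunction_class r mu c \<Longrightarrow> h_c mu c A \<le> M"
  shows "h_c mu c0 A \<le> h_fun r mu A \<and> h_fun r mu A \<le> M"
  unfolding h_fun_def
  by (rule greatest_int_bounds) (use assms in auto)

lemma h_c_le: "h_c mu c A \<le> max 0 (1 + ca_Gamma mu A A div 2)"
proof -
  have "(ca_Gamma mu A A - \<bar>ca_Gamma mu c A\<bar>) div 2 \<le> ca_Gamma mu A A div 2"
    by (intro zdiv_mono1) auto
  then show ?thesis unfolding h_c_def by auto
qed

lemma h_fun_ge:
  assumes "adjunction_class r mu c0"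
  shows "h_c mu c0 A \<le> h_fun r mu A"
  using h_fun_bounds[OF assms h_c_le] by blast

lemma indep_card_le:
  "finite T \<Longrightarrow> T \<subseteq> {x. \<forall>i\<ge>m. x i = 0} \<Longrightarrow> lin_indep_Z T \<Longrightarrow> card T \<le> m"
proof (induction m arbitrary: T)
  case 0
  have "T = {}"
  proof (rule ccontr)
    assume "T \<noteq> {}"
    then obtain v where v: "v \<in> T" by auto
    have "\<forall>k. (\<Sum>u\<in>T. (\<lambda>_. 1::int) u * u k) = 0" using "0.prems"(2) by (auto intro!: sum.neutral)
    then have "\<forall>u\<in>T. (\<lambda>_. 1::int) u = 0" using "0.prems"(3) unfolding lin_indep_Z_def by (elim allE[of _ "\<lambda>_. 1"]) simp
    then show False using v by simp
  qed
  then show ?case by simp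
next
  case (Suc m)
  show ?case
  proof (cases "\<forall>v\<in>T. v m = 0")
    case True
    have "T \<subseteq> {x. \<forall>i\<ge>m. x i = 0}"
    proof (clarify)
      fix x i assume "x \<in> T" "m \<le> i"
      then show "x i = 0" using True Suc.prems(2) by (cases "i = m") auto
    qed
    then have "card T \<le> m" using Suc.IH Suc.prems by blast
    then show ?thesis by simp
  next
    case False
    then obtain w where wT: "w \<in> T" and wm: "w m \<noteq> 0" by auto
    define g where "g v = (\<lambda>k. w m * v k - v m * w k)" for v :: ivec
    define T0 where "T0 = T - {w}"
    have finT0: "finite T0" using Suc.prems(1) by (simp add: T0_def)
    have key: "\<forall>v\<in>T0. d v = 0" if hd: "\<forall>k. (\<Sum>v\<in>T0. d v * g v k) = 0" for d
    proof -
      define c' where "c' u = (if u = w then - (\<Sum>v\<in>T0. d v * v m) else d u * w m)" for u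
      have "(\<Sum>u\<in>T. c' u * u k) = 0" for k
      proof -
        have "(\<Sum>u\<in>T. c' u * u k) = c' w * w k + (\<Sum>u\<in>T0. c' u * u k)"
          using Suc.prems(1) wT unfolding T0_def by (simp add: sum.remove)
        also have "(\<Sum>u\<in>T0. c' u * u k) = (\<Sum>u\<in>T0. d u * w m * u k)"
          by (intro sum.cong) (auto simp: c'_def T0_def)
        also have "c' w * w k = - (\<Sum>v\<in>T0. d v * v m * w k)" by (simp add: c'_def sum_distrib_right)
        finally have "(\<Sum>u\<in>T. c' u * u k) = (\<Sum>v\<in>T0. d v * g v k)"
          by (simp add: g_def sum_subtractf[symmetric] algebra_simps)
        then show ?thesis using hd by simp
      qed
      then have "\<forall>u\<in>T. c' u = 0" using Suc.prems(3) unfolding lin_indep_Z_def by blast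
      show ?thesis
      proof
        fix v assume "v \<in> T0"
        then have v: "v \<in> T" "v \<noteq> w" by (auto simp: T0_def)
        then have "c' v = 0" using \<open>\<forall>u\<in>T. c' u = 0\<close> by blast
        then show "d v = 0" using wm v by (simp add: c'_def)
      qed
    qed
    have inj: "inj_on g T0"
    proof (rule inj_onI, rule ccontr)
      fix v1 v2 assume v: "v1 \<in> T0" "v2 \<in> T0" "g v1 = g v2" "v1 \<noteq> v2"
      define d where "d u = (if u = v1 then 1 else 0) - (if u = v2 then 1 else (0::int))" for u
      have "(\<Sum>v\<in>T0. d v * g v k) = 0" for k
      proof -
        have "(\<Sum>v\<in>T0. d v * g v k) = (\<Sum>v\<in>T0. (if v = v1 then g v k else 0)) - (\<Sum>v\<in>T0. (if v = v2 then g v k else 0))"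
          unfolding sum_subtractf[symmetric] by (intro sum.cong) (auto simp: d_def)
        also have "\<dots> = g v1 k - g v2 k" using finT0 v by simp
        finally show ?thesis using v by simp
      qed
      then have "d v1 = 0" using key v by blast
      then show False using v by (simp add: d_def)
    qed
    have sub: "g ` T0 \<subseteq> {x. \<forall>i\<ge>m. x i = 0}"
    proof
      fix x assume "x \<in> g ` T0"
      then obtain v where v: "v \<in> T0" "x = g v" by auto
      have vs: "\<forall>i\<ge>Suc m. v i = 0" "\<forall>i\<ge>Suc m. w i = 0" using Suc.prems(2) v(1) wT unfolding T0_def by auto
      show "x \<in> {x. \<forall>i\<ge>m. x i = 0}"
      proof (clarify)
        fix i assume "m \<le> i"
        then show "x i = 0" using vs by (cases "i = m") (auto simp: v(2) g_def)
      qed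
    qed
    have ind: "lin_indep_Z (g ` T0)"
      unfolding lin_indep_Z_def
    proof (intro allI impI)
      fix c :: "ivec \<Rightarrow> int" assume h: "\<forall>k. (\<Sum>v\<in>g ` T0. c v * v k) = 0"
      have "\<forall>k. (\<Sum>v\<in>T0. c (g v) * g v k) = 0" using h by (simp add: sum.reindex[OF inj])
      then have "\<forall>v\<in>T0. (\<lambda>v. c (g v)) v = 0" by (rule key)
      then show "\<forall>v\<in>g ` T0. c v = 0" by auto
    qed
    have "card (g ` T0) \<le> m" using Suc.IH[OF _ sub ind] finT0 by blast
    then have "card T0 \<le> m" using card_image[OF inj] by simp
    moreover have "card T = Suc (card T0)" using Suc.prems(1) wT unfolding T0_def using card_Suc_Diff1 by metis
    ultimately show ?thesis by simp
  qed
qed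

lemma sum_two: "(2::nat) \<le> n \<Longrightarrow> (\<forall>i\<ge>2. f i = (0::'a::comm_monoid_add)) \<Longrightarrow> (\<Sum>i<n. f i) = f 0 + f 1"
proof (induction n rule: nat_induct_at_least)
  case base then show ?case by (simp add: numeral_2_eq_2)
next
  case (Suc n) then show ?case by simp
qed

lemma zrank_Deg: "zrank (Deg r k) = r k"
proof -
  let ?S = "{card T | T. T \<subseteq> Deg r k \<and> finite T \<and> lin_indep_Z T}"
  have bd: "x \<le> r k" if hx: "x \<in> ?S" for x
  proof -
    obtain T where T: "x = card T" "T \<subseteq> Deg r k" "finite T" "lin_indep_Z T" using hx by blast
    have "T \<subseteq> {x. \<forall>i\<ge>r k. x i = 0}" using T(2) by (simp add: Deg_def)
    then show ?thesis using indep_card_le[OF T(3) _ T(4)] T(1) by blast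
  qed
  have inj: "inj_on unitv {..<r k}"
    by (rule inj_onI) (metis unitv_def zero_neq_one)
  have mem: "r k \<in> ?S"
  proof -
    let ?T = "unitv ` {..<r k}"
    have "?T \<subseteq> Deg r k" by (auto simp: Deg_def unitv_def)
    moreover have "lin_indep_Z ?T"
      unfolding lin_indep_Z_def
    proof (intro allI impI ballI)
      fix c :: "ivec \<Rightarrow> int" and v
      assume h: "\<forall>k'. (\<Sum>v\<in>?T. c v * v k') = 0" and v: "v \<in> ?T"
      then obtain j where j: "j < r k" "v = unitv j" by auto
      have "(\<Sum>v\<in>?T. c v * v j) = (\<Sum>i<r k. c (unitv i) * unitv i j)"
        by (simp add: sum.reindex[OF inj])
      also have "\<dots> = (\<Sum>i<r k. if i = j then c (unitv j) else 0)"
        by (intro sum.cong) (auto simp: unitv_def)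
      also have "\<dots> = c (unitv j)" using j by simp
      finally show "c v = 0" using h j by simp
    qed
    moreover have "card ?T = r k" using card_image[OF inj] by simp
    moreover have "finite ?T" by simp
    ultimately have "r k = card ?T \<and> ?T \<subseteq> Deg r k \<and> finite ?T \<and> lin_indep_Z ?T" by simp
    then show ?thesis by (intro CollectI exI[of _ ?T])
  qed
  have sub: "?S \<subseteq> {..r k}" using bd by blast
  have fin: "finite ?S" by (rule finite_subset[OF sub]) simp
  have "Max ?S = r k" by (rule Max_eqI[OF fin bd mem])
  then show ?thesis unfolding zrank_def .
qed

lemma det3_zero: "(pa * xa + qa * ya) * ((pb * xb + qb * yb) * (pc * xc + qc * yc) - (pc * xb + qc * yb) * (pb * xc + qb * yc))
      - (pb * xa + qb * ya) * ((pa * xb + qa * yb) * (pc * xc + qc * yc) - (pc * xb + qc * yb) * (pa * xc + qa * yc))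
      + (pc * xa + qc * ya) * ((pa * xb + qa * yb) * (pb * xc + qb * yc) - (pb * xb + qb * yb) * (pa * xc + qa * yc)) = (0::int)"
  by (simp add: algebra_simps)

lemma r2_le2:
  assumes "\<forall>A\<in>Deg r 2. \<exists>a. A = (\<lambda>k. \<Sum>i<(2::nat). a i * e i k)"
  shows "r 2 \<le> 2"
proof (rule ccontr)
  assume "\<not> r 2 \<le> 2"
  then have u: "unitv j \<in> Deg r 2" if "j < 3" for j using that by (auto simp: Deg_def unitv_def)
  obtain a0 where a0: "unitv 0 = (\<lambda>k. \<Sum>i<2. a0 i * e i k)" using assms u[of 0] by auto
  obtain a1 where a1: "unitv 1 = (\<lambda>k. \<Sum>i<2. a1 i * e i k)" using assms u[of 1] by auto
  obtain a2 where a2: "unitv 2 = (\<lambda>k. \<Sum>i<2. a2 i * e i k)" using assms u[of 2] by auto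
  have e: "unitv j k = a 0 * e 0 k + a 1 * e 1 k" if "unitv j = (\<lambda>k. \<Sum>i<(2::nat). a i * e i k)" for j k a
    using fun_cong[OF that, of k] by (simp add: numeral_2_eq_2)
  define x where "x j = e 0 j" for j
  define y where "y j = e 1 j" for j
  have E: "a0 0 * x 0 + a0 1 * y 0 = 1" "a0 0 * x 1 + a0 1 * y 1 = 0" "a0 0 * x 2 + a0 1 * y 2 = 0"
          "a1 0 * x 0 + a1 1 * y 0 = 0" "a1 0 * x 1 + a1 1 * y 1 = 1" "a1 0 * x 2 + a1 1 * y 2 = 0"
          "a2 0 * x 0 + a2 1 * y 0 = 0" "a2 0 * x 1 + a2 1 * y 1 = 0" "a2 0 * x 2 + a2 1 * y 2 = 1"
    using e[OF a0, of 0] e[OF a0, of 1] e[OF a0, of 2]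
          e[OF a1, of 0] e[OF a1, of 1] e[OF a1, of 2]
          e[OF a2, of 0] e[OF a2, of 1] e[OF a2, of 2]
    by (simp_all add: unitv_def x_def y_def)
  note D = det3_zero[where pa="a0 0" and qa="a0 1" and pb="a1 0" and qb="a1 1" and pc="a2 0" and qc="a2 1"
     and xa="x 0" and xb="x 1" and xc="x 2" and ya="y 0" and yb="y 1" and yc="y 2"]
  from D have "(1::int) * (1 * 1 - 0 * 0) - 0 * (0 * 1 - 0 * 0) + 0 * (0 * 0 - 1 * 0) = 0" by (simp only: E)
  then show False by simp
qed

context CA begin

lemma posdef_contra:
  assumes v: "\<forall>i<n. v i \<in> Deg r 2"
    and pd: "posdef_gram n (\<lambda>i j. - real_of_int (G (v i) (v j)))"
    and c: "\<exists>i<n. c i \<noteq> 0"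
    and nn: "G (\<lambda>t. \<Sum>i<n. c i * v i t) (\<lambda>t. \<Sum>i<n. c i * v i t) \<ge> 0"
  shows False
proof -
  let ?x = "\<lambda>i. real_of_int (c i)"
  have xnz: "\<exists>i<n. ?x i \<noteq> 0" using c by auto
  have pd': "\<And>x. (\<exists>i<n. x i \<noteq> 0) \<Longrightarrow> (\<Sum>i<n. \<Sum>j<n. x i * (- real_of_int (G (v i) (v j))) * x j) > 0"
    using pd unfolding posdef_gram_def by blast
  have pos: "(\<Sum>i<n. \<Sum>j<n. ?x i * (- real_of_int (G (v i) (v j))) * ?x j) > 0"
    by (rule pd'[OF xnz])
  have "(\<Sum>i<n. \<Sum>j<n. ?x i * (- real_of_int (G (v i) (v j))) * ?x j)
        = - real_of_int (\<Sum>i<n. \<Sum>j<n. c i * c j * G (v i) (v j))"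
    by (simp add: of_int_sum sum_negf[symmetric] algebra_simps)
  also have "(\<Sum>i<n. \<Sum>j<n. c i * c j * G (v i) (v j)) = G (\<lambda>t. \<Sum>i<n. c i * v i t) (\<lambda>t. \<Sum>i<n. c i * v i t)"
    using G_sum2[of n v c c] v by simp
  finally show False using pos nn by simp
qed

lemma bminus_le:
  assumes v: "\<forall>i<n. v i \<in> Deg r 2"
    and pd: "posdef_gram n (\<lambda>i j. - real_of_int (G (v i) (v j)))"
  shows "n \<le> r 2"
proof -
  have inj: "inj_on v {..<n}"
  proof (rule inj_onI, rule ccontr)
    fix i j assume h: "i \<in> {..<n}" "j \<in> {..<n}" "v i = v j" "i \<noteq> j"
    define c where "c k = (if k = i then 1 else if k = j then -1 else (0::int))" for k
    have "(\<lambda>t. \<Sum>k<n. c k * v k t) = vzero"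
    proof
      fix t
      have "(\<Sum>k<n. c k * v k t) = (\<Sum>k<n. (if k = i then v i t else 0) - (if k = j then v j t else 0))"
        by (intro sum.cong) (auto simp: c_def h)
      also have "\<dots> = v i t - v j t" using h by (simp add: sum_subtractf)
      finally show "(\<Sum>k<n. c k * v k t) = vzero t" using h by (simp add: vzero_def)
    qed
    moreover have "G vzero vzero = 0" by (rule G_zeroR) simp
    moreover have cz: "\<exists>k<n. c k \<noteq> 0" using h by (intro exI[of _ i]) (auto simp: c_def)
    ultimately show False using posdef_contra[OF v pd cz] by simp
  qed
  let ?T = "v ` {..<n}"
  have ind: "lin_indep_Z ?T"
    unfolding lin_indep_Z_def
  proof (intro allI impI ballI, rule ccontr)
    fix d :: "ivec \<Rightarrow> int" and u
    assume h: "\<forall>k. (\<Sum>v\<in>?T. d v * v k) = 0" and u: "u \<in> ?T" "d u \<noteq> 0"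
    have "(\<lambda>t. \<Sum>k<n. d (v k) * v k t) = vzero"
    proof
      fix t show "(\<Sum>k<n. d (v k) * v k t) = vzero t"
        using h by (simp add: sum.reindex[OF inj] vzero_def)
    qed
    moreover have "G vzero vzero = 0" by (rule G_zeroR) simp
    moreover have "\<exists>i<n. d (v i) \<noteq> 0" using u by auto
    ultimately show False using posdef_contra[OF v pd, of "\<lambda>k. d (v k)"] by auto
  qed
  have sub: "?T \<subseteq> {x. \<forall>i\<ge>r 2. x i = 0}" using v by (auto simp: Deg_def)
  have "card ?T \<le> r 2" by (rule indep_card_le[OF _ sub ind]) simp
  then show ?thesis using card_image[OF inj] by simp
qed

lemma basis2_coords:
  assumes "basis_with_gram r mu 2 (two_basis F B) g" "A \<in> Deg r 2"
  shows "\<exists>p q. A = lincomb2 p F q B"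
proof -
  obtain a where "A = (\<lambda>k. \<Sum>i<2. a i * two_basis F B i k)"
    using assms unfolding basis_with_gram_def by blast
  then have "A = lincomb2 (a 0) F (a 1) B"
    by (simp add: lincomb2_def two_basis_def numeral_2_eq_2)
  then show ?thesis by blast
qed

lemma basis2_facts:
  assumes "basis_with_gram r mu 2 (two_basis F B) (gram2 ff fb bb)"
  shows "F \<in> Deg r 2" "B \<in> Deg r 2" "G F F = ff" "G F B = fb" "G B F = fb" "G B B = bb"
proof -
  have e: "\<forall>i<2. two_basis F B i \<in> Deg r 2" and g: "\<forall>i<2. \<forall>j<2. G (two_basis F B i) (two_basis F B j) = gram2 ff fb bb i j"
    using assms unfolding basis_with_gram_def by auto
  show "F \<in> Deg r 2" using e[rule_format, of 0] by (simp add: two_basis_def)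
  show "B \<in> Deg r 2" using e[rule_format, of 1] by (simp add: two_basis_def)
  show "G F F = ff" using g[rule_format, of 0 0] by (simp add: two_basis_def gram2_def)
  show "G F B = fb" using g[rule_format, of 0 1] by (simp add: two_basis_def gram2_def)
  show "G B F = fb" using g[rule_format, of 1 0] by (simp add: two_basis_def gram2_def)
  show "G B B = bb" using g[rule_format, of 1 1] by (simp add: two_basis_def gram2_def)
qed

lemma basis2_r2:
  assumes "basis_with_gram r mu 2 (two_basis F B) g"
  shows "r 2 \<le> 2"
proof (rule r2_le2[of r "two_basis F B"], intro ballI)
  fix A assume "A \<in> Deg r 2"
  then have "\<exists>!a. (\<forall>i\<ge>2. a i = 0) \<and> A = (\<lambda>k. \<Sum>i<2. a i * two_basis F B i k)"
    using assms unfolding basis_with_gram_def by blast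
  then show "\<exists>a. A = (\<lambda>k. \<Sum>i<2. a i * two_basis F B i k)" by blast
qed

lemma bminus_one:
  assumes bas: "basis_with_gram r mu 2 (two_basis F B) (gram2 0 1 bb)" and bb: "bb = 0 \<or> bb = 1"
  shows "ca_bminus r mu = 1"
proof -
  note bf = basis2_facts[OF bas]
  let ?S = "{n. \<exists>v. (\<forall>i<n. v i \<in> Deg r 2) \<and>
       posdef_gram n (\<lambda>i j. - real_of_int (ca_Gamma mu (v i) (v j)))}"
  have le1: "n \<le> 1" if "n \<in> ?S" for n
  proof (rule ccontr)
    assume n2: "\<not> n \<le> 1"
    obtain v where v: "\<forall>i<n. v i \<in> Deg r 2" and pd: "posdef_gram n (\<lambda>i j. - real_of_int (G (v i) (v j)))"
      using \<open>n \<in> ?S\<close> by blast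
    have "v 0 \<in> Deg r 2" "v 1 \<in> Deg r 2" using v n2 by auto
    then obtain p0 q0 p1 q1 where v0: "v 0 = lincomb2 p0 F q0 B" and v1: "v 1 = lincomb2 p1 F q1 B"
      using basis2_coords[OF bas] by meson
    define c where "c i = (if q0 = 0 \<and> q1 = 0 then (if i = 0 then 1 else 0)
                           else (if i = 0 then q1 else if i = 1 then - q0 else 0))" for i :: nat
    have cnz: "\<exists>i<n. c i \<noteq> 0"
    proof (cases "q1 = 0")
      case True
      then have "c 0 \<noteq> 0 \<or> c 1 \<noteq> 0" by (cases "q0 = 0") (simp_all add: c_def)
      then show ?thesis using n2 by (metis One_nat_def less_one not_le_imp_less zero_less_Suc not_less_eq)
    next
      case False then have "c 0 \<noteq> 0" by (simp add: c_def)
      then show ?thesis using n2 by (intro exI[of _ 0]) simp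
    qed
    have "(\<lambda>t. \<Sum>i<n. c i * v i t) = (\<lambda>t. c 0 * v 0 t + c 1 * v 1 t)"
      using n2 by (intro ext sum_two) (auto simp: c_def)
    also have "\<dots> = lincomb2 (c 0 * p0 + c 1 * p1) F (c 0 * q0 + c 1 * q1) B"
      by (simp add: v0 v1 v1[unfolded One_nat_def] lincomb2_def algebra_simps)
    also have "c 0 * q0 + c 1 * q1 = 0" by (simp add: c_def)
    finally have w: "(\<lambda>t. \<Sum>i<n. c i * v i t) = lincomb2 (c 0 * p0 + c 1 * p1) F 0 B" .
    have "G (lincomb2 (c 0 * p0 + c 1 * p1) F 0 B) (lincomb2 (c 0 * p0 + c 1 * p1) F 0 B) = 0"
      using G_lincomb2 bf by simp
    then show False using posdef_contra[OF v pd cnz] w by simp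
  qed
  have mem1: "1 \<in> ?S"
  proof -
    let ?v = "\<lambda>_::nat. lincomb2 1 F (-1) B"
    have "G (lincomb2 1 F (-1) B) (lincomb2 1 F (-1) B) = bb - 2" using G_lincomb2 bf by simp
    then have "posdef_gram 1 (\<lambda>i j. - real_of_int (G (?v i) (?v j)))"
      using bb unfolding posdef_gram_def by (auto simp: zero_less_mult_iff)
    moreover have "\<forall>i<1. ?v i \<in> Deg r 2" using bf by simp
    ultimately show ?thesis by (intro CollectI exI[of _ ?v] conjI)
  qed
  have fin: "finite ?S" by (rule finite_subset[of _ "{..1}"]) (use le1 in auto)
  have "Max ?S = 1" by (rule Max_eqI[OF fin le1 mem1])
  then show ?thesis unfolding ca_bminus_def .
qed

lemma b1tilde_zero:
  assumes "ca_IT r mu = {vzero}"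
  shows "ca_b1tilde r mu = 0"
proof -
  have "{x \<in> Deg r 1. \<forall>y\<in>Deg r 1. mu 1 1 x y = vzero} = Deg r 1"
  proof (intro set_eqI iffI)
    fix x assume x: "x \<in> Deg r 1"
    have "\<forall>y\<in>Deg r 1. mu 1 1 x y = vzero"
    proof
      fix y assume y: "y \<in> Deg r 1"
      have "(\<lambda>k. \<Sum>i<(1::nat). mu 1 1 ((\<lambda>_. x) i) ((\<lambda>_. y) i) k) \<in> ca_IT r mu"
        unfolding ca_IT_def by (intro CollectI exI[of _ 1] exI[of _ "\<lambda>_. x"] exI[of _ "\<lambda>_. y"]) (use x y in auto)
      then show "mu 1 1 x y = vzero" using assms by simp
    qed
    then show "x \<in> {x \<in> Deg r 1. \<forall>y\<in>Deg r 1. mu 1 1 x y = vzero}" using x by simp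
  qed simp
  then show ?thesis unfolding ca_b1tilde_def by (simp add: zrank_Deg)
qed

end

lemma trich:
  fixes h :: int
  assumes "N \<Longrightarrow> h < 0" "Z \<Longrightarrow> h = 0" "\<not> N \<Longrightarrow> \<not> Z \<Longrightarrow> h > 0" "\<not> (N \<and> Z)"
  shows "(h < 0 \<longleftrightarrow> N) \<and> (h = 0 \<longleftrightarrow> Z) \<and> (\<not> N \<and> \<not> Z \<longrightarrow> h > 0)"
  using assms by (cases N; cases Z) auto

lemma sq_mod2: "(q * q) mod 2 = q mod (2::int)"
proof -
  have "q mod 2 = 0 \<or> q mod 2 = 1" by arith
  moreover have "(q * q) mod 2 = ((q mod 2) * (q mod 2)) mod 2" by (simp add: mod_mult_eq)
  ultimately show ?thesis by auto
qed

lemma div2_bound: "(X::int) \<le> - 2 * a \<Longrightarrow> 1 + X div 2 \<le> 1 - a"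
proof -
  assume "X \<le> - 2 * a"
  then have "X div 2 \<le> (- 2 * a) div 2" by (rule zdiv_mono1) simp
  then show ?thesis by simp
qed

lemma even_abs2: "even (x::int) \<Longrightarrow> x \<noteq> 0 \<Longrightarrow> \<bar>x\<bar> \<ge> 2"
  by (elim evenE) auto

lemma abs_same_sign: "(x::int) * y > 0 \<Longrightarrow> a \<ge> 0 \<Longrightarrow> \<bar>x + y * a\<bar> = \<bar>x\<bar> + \<bar>y\<bar> * a"
proof -
  assume h: "x * y > 0" "a \<ge> 0"
  then have "(x > 0 \<and> y > 0) \<or> (x < 0 \<and> y < 0)" by (simp add: zero_less_mult_iff)
  then show ?thesis
  proof
    assume "x > 0 \<and> y > 0"
    moreover have "y * a \<ge> 0" using calculation h by simp
    ultimately show ?thesis by simp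
  next
    assume "x < 0 \<and> y < 0"
    moreover have "y * a \<le> 0" using calculation h by (simp add: mult_nonpos_nonneg)
    ultimately show ?thesis by simp
  qed
qed

context CA begin

lemma zero_iff:
  assumes bas: "basis_with_gram r mu 2 (two_basis F B) (gram2 0 1 bb)"
  shows "lincomb2 a F b B = vzero \<longleftrightarrow> a = 0 \<and> b = 0"
proof
  note bf = basis2_facts[OF bas]
  assume h: "lincomb2 a F b B = vzero"
  have "G (lincomb2 a F b B) F = b" using G_lincombL bf by simp
  moreover have "G (lincomb2 a F b B) B = a + b * bb" using G_lincombL bf by simp
  moreover have "G vzero x = 0" if "x \<in> Deg r 2" for x using G_zeroR G_sym that by (metis Deg_vzero)
  ultimately show "a = 0 \<and> b = 0" using h bf by auto
next
  assume "a = 0 \<and> b = 0" then show "lincomb2 a F b B = vzero" by (simp add: lincomb2_def vzero_def)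
qed

lemma sigma_val: "ca_bplus r mu = 1 \<Longrightarrow> ca_sigma r mu = 1 - int (ca_bminus r mu)"
  by (simp add: ca_sigma_def)

lemma adj_coords:
  assumes bas: "basis_with_gram r mu 2 (two_basis F B) (gram2 0 1 bb)"
    and adj: "adjunction_class r mu c"
  obtains x y where "c = lincomb2 x F y B" "even y"
proof -
  note bf = basis2_facts[OF bas]
  have cD: "c \<in> Deg r 2" and ch: "\<forall>A\<in>Deg r 2. G c A mod 2 = G A A mod 2"
    using adj unfolding adjunction_class_def characteristic_def by auto
  obtain x y where c: "c = lincomb2 x F y B" using basis2_coords[OF bas cD] by blast
  have "G c F = y" using c G_lincombL bf by simp
  moreover have "G c F mod 2 = G F F mod 2" using ch bf by blast
  ultimately have "even y" using bf by (simp add: even_iff_mod_2_eq_zero)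
  then show ?thesis using that c by blast
qed

lemma case1:
  assumes bplus: "ca_bplus r mu = 1" and IT: "ca_IT r mu = {vzero}"
    and bas: "basis_with_gram r mu 2 (two_basis F B) (gram2 0 1 0)"
    and ab: "a \<ge> \<bar>b\<bar>" "G (lincomb2 a F b B) (lincomb2 a F b B) \<ge> 0"
  shows "(h_fun r mu (lincomb2 a F b B) < 0 \<longleftrightarrow> a > 1 \<and> b = 0) \<and>
          (h_fun r mu (lincomb2 a F b B) = 0 \<longleftrightarrow> (a \<ge> 1 \<and> b = 1) \<or> (a, b) \<in> {(1, 0), (0, 0)}) \<and>
          (\<not> (a > 1 \<and> b = 0) \<and> \<not> ((a \<ge> 1 \<and> b = 1) \<or> (a, b) \<in> {(1, 0), (0, 0)}) \<longrightarrow>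
             h_fun r mu (lincomb2 a F b B) > 0)"
proof -
  note bf = basis2_facts[OF bas]
  let ?A = "lincomb2 a F b B"
  have sig: "ca_sigma r mu = 0" using sigma_val[OF bplus] bminus_one[OF bas] by simp
  have chi: "ca_chitilde r mu \<ge> 2" using b1tilde_zero[OF IT] unfolding ca_chitilde_def by simp
  have GAA: "G ?A ?A = 2 * a * b" using G_lincomb2 bf by simp
  have A0: "?A = vzero \<longleftrightarrow> a = 0 \<and> b = 0" by (rule zero_iff[OF bas])
  have adjP: "\<exists>x y. c = lincomb2 x F y B \<and> even x \<and> even y \<and> x * y > 0" if adj: "adjunction_class r mu c" for c
  proof -
    obtain x y where c: "c = lincomb2 x F y B" "even y" using adj_coords[OF bas adj] by blast
    have ch: "\<forall>A\<in>Deg r 2. G c A mod 2 = G A A mod 2"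
      using adj unfolding adjunction_class_def characteristic_def by auto
    have "G c B = x" using c G_lincombL bf by simp
    moreover have "G c B mod 2 = G B B mod 2" using ch bf by blast
    ultimately have ex: "even x" using bf by (simp add: even_iff_mod_2_eq_zero)
    have "G c c = 2 * x * y" using c G_lincomb2 bf by simp
    moreover have "G c c > ca_sigma r mu \<or> G c c \<ge> 2 * ca_chitilde r mu + 3 * ca_sigma r mu"
      using adj unfolding adjunction_class_def by auto
    ultimately have "x * y > 0" using sig chi by auto
    then show ?thesis using c ex by blast
  qed
  have hcA: "h_c mu (lincomb2 x F y B) ?A = (if a = 0 \<and> b = 0 then 0 else 1 + (2 * a * b - \<bar>x * b + y * a\<bar>) div 2)" for x y
  proof -
    have "G (lincomb2 x F y B) ?A = x * b + y * a" using G_lincomb2 bf by simp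
    then show ?thesis unfolding h_c_def using A0 GAA by simp
  qed
  let ?c0 = "lincomb2 2 F 2 B"
  have adj0: "adjunction_class r mu ?c0"
  proof -
    have "characteristic r mu ?c0"
      unfolding characteristic_def
    proof (intro conjI ballI)
      show "?c0 \<in> Deg r 2" using bf by simp
      fix A' assume "A' \<in> Deg r 2"
      then obtain p q where A': "A' = lincomb2 p F q B" using basis2_coords[OF bas] by blast
      have "G ?c0 A' = 2 * q + 2 * p" "G A' A' = 2 * p * q" using A' G_lincomb2 bf by simp_all
      then show "G ?c0 A' mod 2 = G A' A' mod 2" by simp
    qed
    moreover have "G ?c0 ?c0 = 8" using G_lincomb2 bf by simp
    ultimately show ?thesis unfolding adjunction_class_def using sig by simp
  qed
  have w: "h_c mu ?c0 ?A \<le> h_fun r mu ?A" by (rule h_fun_ge[OF adj0])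
  have hw: "h_c mu ?c0 ?A = (if a = 0 \<and> b = 0 then 0 else 1 + a * b - \<bar>a + b\<bar>)"
  proof -
    have "\<bar>2 * b + 2 * a\<bar> = 2 * \<bar>a + b\<bar>" by arith
    then have "2 * a * b - \<bar>2 * b + 2 * a\<bar> = 2 * (a * b - \<bar>a + b\<bar>)" by simp
    then have "(2 * a * b - \<bar>2 * b + 2 * a\<bar>) div 2 = a * b - \<bar>a + b\<bar>" by simp
    then show ?thesis using hcA[of 2 2] by simp
  qed
  have b0: "b \<ge> 0"
  proof (rule ccontr)
    assume "\<not> b \<ge> 0"
    then have "a > 0" "b < 0" using ab by auto
    then have "a * b < 0" by (rule mult_pos_neg)
    then show False using ab GAA by simp
  qed
  have ubF: "h_fun r mu ?A \<le> 1 - a" if "b = 0" "a \<ge> 1"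
  proof -
    have "h_c mu c ?A \<le> 1 - a" if adj: "adjunction_class r mu c" for c
    proof -
      obtain x y where c: "c = lincomb2 x F y B" "even y" "x * y > 0" using adjP[OF adj] by blast
      have "y \<noteq> 0" using c by auto
      then have "\<bar>y\<bar> \<ge> 2" using c(2) by (intro even_abs2)
      then have "\<bar>y * a\<bar> \<ge> 2 * a" using \<open>a \<ge> 1\<close> by (simp add: abs_mult mult_right_mono)
      then show ?thesis using hcA[of x y] c \<open>b = 0\<close> \<open>a \<ge> 1\<close> by (simp add: div2_bound)
    qed
    then show ?thesis using h_fun_bounds[OF adj0] by blast
  qed
  have ubB: "h_fun r mu ?A \<le> 0" if "b = 1" "a \<ge> 1"
  proof -
    have "h_c mu c ?A \<le> 0" if adj: "adjunction_class r mu c" for c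
    proof -
      obtain x y where c: "c = lincomb2 x F y B" "even x" "even y" "x * y > 0" using adjP[OF adj] by blast
      have "x \<noteq> 0" "y \<noteq> 0" using c(4) by auto
      then have "\<bar>x\<bar> \<ge> 2" "\<bar>y\<bar> \<ge> 2" using c(2,3) by (simp_all add: even_abs2)
      moreover have "\<bar>x + y * a\<bar> = \<bar>x\<bar> + \<bar>y\<bar> * a" using c(4) \<open>a \<ge> 1\<close>
        by (intro abs_same_sign) auto
      moreover have "2 * a \<le> \<bar>y\<bar> * a" using \<open>a \<ge> 1\<close> calculation(2) by (intro mult_right_mono) auto
      ultimately have "\<bar>x + y * a\<bar> \<ge> 2 + 2 * a" by linarith
      then have "2 * a - \<bar>x + y * a\<bar> \<le> - 2 * 1" by simp
      then show ?thesis using hcA[of x y] c(1) \<open>b = 1\<close> \<open>a \<ge> 1\<close> div2_bound[of "2 * a - \<bar>x + y * a\<bar>" 1] by simp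
    qed
    then show ?thesis using h_fun_bounds[OF adj0] by blast
  qed
  have zer: "h_fun r mu ?A = 0" if "a = 0" "b = 0"
  proof -
    have "h_c mu c ?A \<le> 0" for c using that A0 unfolding h_c_def by simp
    then show ?thesis using h_fun_bounds[OF adj0] hw that by fastforce
  qed
  show ?thesis
  proof (rule trich)
    assume "a > 1 \<and> b = 0"
    then show "h_fun r mu ?A < 0" using ubF by fastforce
  next
    assume "(a \<ge> 1 \<and> b = 1) \<or> (a, b) \<in> {(1, 0), (0, 0)}"
    then consider "a \<ge> 1" "b = 1" | "a = 1" "b = 0" | "a = 0" "b = 0" by auto
    then show "h_fun r mu ?A = 0"
    proof cases
      case 1 then show ?thesis using ubB w hw by fastforce
    next
      case 2 then show ?thesis using ubF w hw by fastforce
    next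
      case 3 then show ?thesis using zer by blast
    qed
  next
    assume n: "\<not> (a > 1 \<and> b = 0)" "\<not> ((a \<ge> 1 \<and> b = 1) \<or> (a, b) \<in> {(1, 0), (0, 0)})"
    then have "b \<ge> 2" "a \<ge> 2" using b0 ab(1) by auto
    then have "(a - 1) * (b - 1) \<ge> 1 * 1" by (intro mult_mono) auto
    then have "1 + a * b - \<bar>a + b\<bar> \<ge> 1" using \<open>b \<ge> 2\<close> \<open>a \<ge> 2\<close> by (simp add: algebra_simps)
    then show "h_fun r mu ?A > 0" using w hw \<open>b \<ge> 2\<close> by auto
  qed auto
qed

end

context CA begin

lemma setup35:
  assumes bplus: "ca_bplus r mu = 1" and b1: "ca_b1tilde r mu = 2"
    and IT: "ca_IT r mu = {smul k F | k. True}"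
    and bas: "basis_with_gram r mu 2 (two_basis F B) (gram2 0 1 bb)" and bb: "bb = 0 \<or> bb = 1"
  shows "ca_sigma r mu = 0" "2 * ca_chitilde r mu + 3 * ca_sigma r mu \<le> 0"
    "F \<in> ca_IT r mu" "ca_IT r mu \<noteq> {vzero}"
    "adjunction_class r mu c \<Longrightarrow> \<exists>x y. c = lincomb2 x F y B \<and> even y \<and> y \<noteq> 0"
proof -
  note bf = basis2_facts[OF bas]
  show sig: "ca_sigma r mu = 0" using sigma_val[OF bplus] bminus_one[OF bas bb] by simp
  show "2 * ca_chitilde r mu + 3 * ca_sigma r mu \<le> 0"
  proof -
    have "r 2 \<le> 2" by (rule basis2_r2[OF bas])
    then have "int (r 2) \<le> 2" by simp
    then show ?thesis unfolding ca_chitilde_def b1 sig by simp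
  qed
  show FI: "F \<in> ca_IT r mu" unfolding IT by (intro CollectI exI[of _ 1]) (simp add: smul_def)
  have "lincomb2 1 F 0 B = F" by (simp add: lincomb2_def)
  then have "F \<noteq> vzero" using zero_iff[OF bas, of 1 0] by simp
  then show "ca_IT r mu \<noteq> {vzero}" using FI by blast
  assume adj: "adjunction_class r mu c"
  obtain x y where c: "c = lincomb2 x F y B" "even y" using adj_coords[OF bas adj] by blast
  have cD: "c \<in> Deg r 2" using c bf by simp
  have GcF: "G c F = y" using c G_lincombL bf by simp
  have "y \<noteq> 0"
  proof
    assume y0: "y = 0"
    have "G c c = 2 * x * y + y * y * bb" using c G_lincomb2 bf by simp
    then have "G c c = 0" using y0 by simp
    then have "\<exists>z\<in>ca_IT r mu. G c z \<noteq> 0"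
      using adj sig \<open>ca_IT r mu \<noteq> {vzero}\<close> unfolding adjunction_class_def by auto
    then obtain k where "G c (smul k F) \<noteq> 0" using IT by auto
    then show False using G_smulR[OF cD bf(1)] GcF y0 by simp
  qed
  then show "\<exists>x y. c = lincomb2 x F y B \<and> even y \<and> y \<noteq> 0" using c by blast
qed

lemma ubF35:
  assumes bas: "basis_with_gram r mu 2 (two_basis F B) (gram2 0 1 bb)"
    and adjP: "\<And>c. adjunction_class r mu c \<Longrightarrow> \<exists>x y. c = lincomb2 x F y B \<and> even y \<and> y \<noteq> 0"
    and a: "a \<ge> 1" and adjc: "adjunction_class r mu c"
  shows "h_c mu c (lincomb2 a F 0 B) \<le> 1 - a"
proof -
  note bf = basis2_facts[OF bas]
  obtain x y where c: "c = lincomb2 x F y B" "even y" "y \<noteq> 0" using adjP[OF adjc] by blast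
  have "\<bar>y\<bar> \<ge> 2" using c by (simp add: even_abs2)
  then have y2: "\<bar>y * a\<bar> \<ge> 2 * a" using a by (simp add: abs_mult mult_right_mono)
  have "G c (lincomb2 a F 0 B) = y * a" using c G_lincomb2 bf by simp
  moreover have "G (lincomb2 a F 0 B) (lincomb2 a F 0 B) = 0" using G_lincomb2 bf by simp
  moreover have "lincomb2 a F 0 B \<noteq> vzero" using zero_iff[OF bas] a by simp
  ultimately show ?thesis unfolding h_c_def using div2_bound[of "- \<bar>y * a\<bar>" a] y2 by simp
qed

lemma case3:
  assumes bplus: "ca_bplus r mu = 1" and b1: "ca_b1tilde r mu = 2"
    and IT: "ca_IT r mu = {smul k F | k. True}"
    and bas: "basis_with_gram r mu 2 (two_basis F B) (gram2 0 1 0)"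
    and ab: "a > 0 \<or> (a = 0 \<and> b \<ge> 0)" "G (lincomb2 a F b B) (lincomb2 a F b B) \<ge> 0"
  shows "(h_fun r mu (lincomb2 a F b B) < 0 \<longleftrightarrow> a > 1 \<and> b = 0) \<and>
          (h_fun r mu (lincomb2 a F b B) = 0 \<longleftrightarrow> (a, b) \<in> {(1, 0), (0, 0)}) \<and>
          (\<not> (a > 1 \<and> b = 0) \<and> (a, b) \<notin> {(1, 0), (0, 0)} \<longrightarrow>
             h_fun r mu (lincomb2 a F b B) > 0)"
proof -
  note bf = basis2_facts[OF bas]
  note S = setup35[OF bplus b1 IT bas]
  let ?A = "lincomb2 a F b B"
  have GAA: "G ?A ?A = 2 * a * b" using G_lincomb2 bf by simp
  have A0: "?A = vzero \<longleftrightarrow> a = 0 \<and> b = 0" by (rule zero_iff[OF bas])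
  let ?c0 = "lincomb2 0 F 2 B"
  have adj0: "adjunction_class r mu ?c0"
  proof -
    have "characteristic r mu ?c0"
      unfolding characteristic_def
    proof (intro conjI ballI)
      show "?c0 \<in> Deg r 2" using bf by simp
      fix A' assume "A' \<in> Deg r 2"
      then obtain p q where A': "A' = lincomb2 p F q B" using basis2_coords[OF bas] by blast
      have "G ?c0 A' = 2 * p" "G A' A' = 2 * p * q" using A' G_lincomb2 bf by simp_all
      then show "G ?c0 A' mod 2 = G A' A' mod 2" by simp
    qed
    moreover have "G ?c0 ?c0 = 0" using G_lincomb2 bf by simp
    moreover have "G ?c0 F = 2" using G_lincombL bf by simp
    ultimately show ?thesis unfolding adjunction_class_def using S(2) S(3) by force
  qed
  have w: "h_c mu ?c0 ?A \<le> h_fun r mu ?A" by (rule h_fun_ge[OF adj0])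
  have hw: "h_c mu ?c0 ?A = (if a = 0 \<and> b = 0 then 0 else 1 + a * b - \<bar>a\<bar>)"
  proof -
    have "G ?c0 ?A = 2 * a" using G_lincomb2 bf by simp
    moreover have "\<bar>2 * a\<bar> = 2 * \<bar>a\<bar>" by arith
    ultimately show ?thesis unfolding h_c_def using A0 GAA by simp
  qed
  have ubF: "h_fun r mu ?A \<le> 1 - a" if "b = 0" "a \<ge> 1"
    using h_fun_bounds[OF adj0 ubF35[OF bas S(5) \<open>a \<ge> 1\<close>]] that by blast
  have zer: "h_fun r mu ?A = 0" if "a = 0" "b = 0"
  proof -
    have "h_c mu c ?A \<le> 0" for c using that A0 unfolding h_c_def by simp
    then show ?thesis using h_fun_bounds[OF adj0] hw that by fastforce
  qed
  show ?thesis
  proof (rule trich)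
    assume "a > 1 \<and> b = 0"
    then show "h_fun r mu ?A < 0" using ubF by fastforce
  next
    assume "(a, b) \<in> {(1, 0), (0, 0)}"
    then consider "a = 1" "b = 0" | "a = 0" "b = 0" by auto
    then show "h_fun r mu ?A = 0"
    proof cases
      case 1 then show ?thesis using ubF w hw by fastforce
    next
      case 2 then show ?thesis using zer by blast
    qed
  next
    assume n: "\<not> (a > 1 \<and> b = 0)" "(a, b) \<notin> {(1, 0), (0, 0)}"
    have "1 + a * b - \<bar>a\<bar> \<ge> 1 \<and> \<not> (a = 0 \<and> b = 0)"
    proof (cases "a = 0")
      case True then show ?thesis using n ab by auto
    next
      case False
      then have "a \<ge> 1" using ab by auto
      have "b \<ge> 0"
      proof (rule ccontr)
        assume "\<not> b \<ge> 0"
        then have "a * b < 0" using \<open>a \<ge> 1\<close> by (intro mult_pos_neg) auto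
        then show False using ab GAA by simp
      qed
      then have "b \<ge> 1" using n \<open>a \<ge> 1\<close> by auto
      then have "a * b \<ge> a * 1" using \<open>a \<ge> 1\<close> by (intro mult_left_mono) auto
      then show ?thesis using \<open>a \<ge> 1\<close> by auto
    qed
    then show "h_fun r mu ?A > 0" using w hw by auto
  qed auto
qed

lemma case5:
  assumes bplus: "ca_bplus r mu = 1" and b1: "ca_b1tilde r mu = 2"
    and IT: "ca_IT r mu = {smul k F | k. True}"
    and bas: "basis_with_gram r mu 2 (two_basis F B) (gram2 0 1 1)"
    and ab: "a > 0 \<or> (a = 0 \<and> b \<ge> 0)" "G (lincomb2 a F b B) (lincomb2 a F b B) \<ge> 0"
  shows "(h_fun r mu (lincomb2 a F b B) < 0 \<longleftrightarrow> a > 1 \<and> b = 0) \<and>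
          (h_fun r mu (lincomb2 a F b B) = 0 \<longleftrightarrow> (a, b) \<in> {(1, 0), (0, 0)}) \<and>
          (\<not> (a > 1 \<and> b = 0) \<and> (a, b) \<notin> {(1, 0), (0, 0)} \<longrightarrow>
             h_fun r mu (lincomb2 a F b B) > 0)"
proof -
  note bf = basis2_facts[OF bas]
  note S = setup35[OF bplus b1 IT bas]
  let ?A = "lincomb2 a F b B"
  have GAA: "G ?A ?A = 2 * a * b + b * b" using G_lincomb2 bf by simp
  have A0: "?A = vzero \<longleftrightarrow> a = 0 \<and> b = 0" by (rule zero_iff[OF bas])
  let ?c0 = "lincomb2 (-1) F 2 B"
  have adj0: "adjunction_class r mu ?c0"
  proof -
    have "characteristic r mu ?c0"
      unfolding characteristic_def
    proof (intro conjI ballI)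
      show "?c0 \<in> Deg r 2" using bf by simp
      fix A' assume "A' \<in> Deg r 2"
      then obtain p q where A': "A' = lincomb2 p F q B" using basis2_coords[OF bas] by blast
      have "G ?c0 A' = 2 * p + q" "G A' A' = 2 * (p * q) + q * q" using A' G_lincomb2 bf by simp_all
      moreover have "(q * q) mod 2 = q mod 2" by (rule sq_mod2)
      ultimately show "G ?c0 A' mod 2 = G A' A' mod 2" by presburger
    qed
    moreover have "G ?c0 ?c0 = 0" using G_lincomb2 bf by simp
    moreover have "G ?c0 F = 2" using G_lincombL bf by simp
    ultimately show ?thesis unfolding adjunction_class_def using S(2) S(3) by force
  qed
  have w: "h_c mu ?c0 ?A \<le> h_fun r mu ?A" by (rule h_fun_ge[OF adj0])
  have hw: "h_c mu ?c0 ?A = (if a = 0 \<and> b = 0 then 0 else 1 + (2 * a * b + b * b - \<bar>2 * a + b\<bar>) div 2)"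
  proof -
    have "G ?c0 ?A = 2 * a + b" using G_lincomb2 bf by simp
    then show ?thesis unfolding h_c_def using A0 GAA by simp
  qed
  have ubF: "h_fun r mu ?A \<le> 1 - a" if "b = 0" "a \<ge> 1"
    using h_fun_bounds[OF adj0 ubF35[OF bas S(5) \<open>a \<ge> 1\<close>]] that by blast
  have zer: "h_fun r mu ?A = 0" if "a = 0" "b = 0"
  proof -
    have "h_c mu c ?A \<le> 0" for c using that A0 unfolding h_c_def by simp
    then show ?thesis using h_fun_bounds[OF adj0] hw that by fastforce
  qed
  show ?thesis
  proof (rule trich)
    assume "a > 1 \<and> b = 0"
    then show "h_fun r mu ?A < 0" using ubF by fastforce
  next
    assume "(a, b) \<in> {(1, 0), (0, 0)}"
    then consider "a = 1" "b = 0" | "a = 0" "b = 0" by auto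
    then show "h_fun r mu ?A = 0"
    proof cases
      case 1 then show ?thesis using ubF w hw by fastforce
    next
      case 2 then show ?thesis using zer by blast
    qed
  next
    assume n: "\<not> (a > 1 \<and> b = 0)" "(a, b) \<notin> {(1, 0), (0, 0)}"
    have X: "2 * a * b + b * b - \<bar>2 * a + b\<bar> \<ge> 0"
    proof (cases "b \<ge> 0")
      case True
      then have "2 * a + b \<ge> 0" using ab by auto
      moreover have "b \<ge> 1" using True n ab by auto
      ultimately have "(2 * a + b) * (b - 1) \<ge> 0" by simp
      then show ?thesis using \<open>2 * a + b \<ge> 0\<close> by (simp add: algebra_simps)
    next
      case False
      have "b * (2 * a + b) \<ge> 0" using ab GAA by (simp add: algebra_simps)
      then have "2 * a + b \<le> 0" using False by (simp add: zero_le_mult_iff)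
      moreover have "b + 1 \<le> 0" using False by simp
      ultimately have "(2 * a + b) * (b + 1) \<ge> 0" by (simp add: zero_le_mult_iff)
      then show ?thesis using \<open>2 * a + b \<le> 0\<close> by (simp add: algebra_simps)
    qed
    have "\<not> (a = 0 \<and> b = 0)" using n by auto
    moreover have "(2 * a * b + b * b - \<bar>2 * a + b\<bar>) div 2 \<ge> 0" using X by simp
    ultimately show "h_fun r mu ?A > 0" using w hw by auto
  qed auto
qed

end

lemma even_quad:
  fixes M :: "nat \<Rightarrow> nat \<Rightarrow> int"
  assumes sym: "\<And>i j. M i j = M j i" and dg: "\<And>i. even (M i i)"
  shows "even (\<Sum>i<n. \<Sum>j<(n::nat). a i * a j * M i j)"
proof (induction n)
  case 0 then show ?case by simp
next
  case (Suc n)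
  let ?f = "\<lambda>i j. a i * a j * M i j"
  have "(\<Sum>i<Suc n. \<Sum>j<Suc n. ?f i j) = (\<Sum>i<n. \<Sum>j<n. ?f i j) + (\<Sum>i<n. ?f i n) + (\<Sum>j<n. ?f n j) + ?f n n"
    by (simp add: sum.distrib)
  also have "(\<Sum>j<n. ?f n j) = (\<Sum>i<n. ?f i n)" using sym by (intro sum.cong) (auto simp: mult.commute)
  finally have eq: "(\<Sum>i<Suc n. \<Sum>j<Suc n. ?f i j) = (\<Sum>i<n. \<Sum>j<n. ?f i j) + 2 * (\<Sum>i<n. ?f i n) + a n * a n * M n n"
    by simp
  have ev: "even (a n * a n * M n n)" using dg by simp
  show ?case unfolding eq using Suc.IH ev by (simp del: sum.lessThan_Suc)
qed

lemma E8_sym: "E8 i j = E8 j i"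
  unfolding E8_def E8_adj_def by (auto simp: insert_commute)

lemma UE8_sym: "U_minus_E8 i j = U_minus_E8 j i"
  unfolding U_minus_E8_def using E8_sym by auto

lemma UE8_diag: "even (U_minus_E8 i i)"
  unfolding U_minus_E8_def E8_def by auto

context CA begin

lemma case2:
  assumes bplus: "ca_bplus r mu = 1"
    and bas: "basis_with_gram r mu 10 e U_minus_E8"
    and A: "A \<in> Deg r 2" "A \<noteq> vzero" "G A A \<ge> 0"
  shows "h_fun r mu A > 0"
proof -
  have eD: "\<And>i. i < 10 \<Longrightarrow> e i \<in> Deg r 2" and eG: "\<And>i j. i < 10 \<Longrightarrow> j < 10 \<Longrightarrow> G (e i) (e j) = U_minus_E8 i j"
    and co: "\<And>A'. A' \<in> Deg r 2 \<Longrightarrow> \<exists>a. A' = (\<lambda>k. \<Sum>i<10. a i * e i k)"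
    using bas unfolding basis_with_gram_def by blast+
  have evn: "even (G A' A')" if hA': "A' \<in> Deg r 2" for A'
  proof -
    obtain a where a: "A' = (\<lambda>k. \<Sum>i<10. a i * e i k)" using co[OF hA'] by blast
    have "G A' A' = (\<Sum>i<10. \<Sum>j<10. a i * a j * G (e i) (e j))" unfolding a by (rule G_sum2) (rule eD)
    also have "\<dots> = (\<Sum>i<10. \<Sum>j<10. a i * a j * U_minus_E8 i j)" by (intro sum.cong refl) (simp add: eG)
    finally have "G A' A' = (\<Sum>i<10. \<Sum>j<10. a i * a j * U_minus_E8 i j)" .
    moreover have "even (\<Sum>i<10. \<Sum>j<10. a i * a j * U_minus_E8 i j)"
      by (rule even_quad) (rule UE8_sym, rule UE8_diag)
    ultimately show ?thesis by simp
  qed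
  let ?S = "{n. \<exists>v. (\<forall>i<n. v i \<in> Deg r 2) \<and>
       posdef_gram n (\<lambda>i j. - real_of_int (ca_Gamma mu (v i) (v j)))}"
  have bd: "n \<le> r 2" if "n \<in> ?S" for n using that bminus_le by blast
  have fin: "finite ?S" by (rule finite_subset[of _ "{..r 2}"]) (use bd in auto)
  have mem2: "2 \<in> ?S"
  proof -
    let ?v = "\<lambda>i::nat. if i = 0 then e 2 else e 4"
    have vD: "\<forall>i<2. ?v i \<in> Deg r 2" using eD by simp
    have ne1: "{0::nat, 2} \<noteq> {4, 7}"
    proof
      assume "{0::nat, 2} = {4, 7}"
      then have "(0::nat) \<in> {4, 7}" by (metis insertI1)
      then show False by simp
    qed
    have ne2: "{2::nat, 0} \<noteq> {4, 7}" using ne1 by (simp add: insert_commute)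
    have g: "G (e 2) (e 2) = -2" "G (e 2) (e 4) = 0" "G (e 4) (e 2) = 0" "G (e 4) (e 4) = -2"
      using eG[of 2 2] eG[of 2 4] eG[of 4 2] eG[of 4 4] by (simp_all add: U_minus_E8_def E8_def E8_adj_def ne1 ne2)
    have "posdef_gram 2 (\<lambda>i j. - real_of_int (G (?v i) (?v j)))"
      unfolding posdef_gram_def
    proof (intro allI impI)
      fix x :: "nat \<Rightarrow> real" assume "\<exists>i<2. x i \<noteq> 0"
      then have "x 0 \<noteq> 0 \<or> x 1 \<noteq> 0" by (auto simp: less_2_cases_iff)
      then have "x 0 * x 0 + x 1 * x 1 > 0" by (metis add_pos_nonneg add_nonneg_pos not_real_square_gt_zero zero_le_square)
      then show "(\<Sum>i<2. \<Sum>j<2. x i * - real_of_int (G (?v i) (?v j)) * x j) > 0"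
      proof -
        have l2: "{..<2::nat} = {0, 1}" by auto
        show ?thesis unfolding l2 using \<open>x 0 * x 0 + x 1 * x 1 > 0\<close> by (simp add: g algebra_simps)
      qed
    qed
    then show ?thesis using vD by (intro CollectI exI[of _ ?v] conjI)
  qed
  have "ca_bminus r mu \<ge> 2" unfolding ca_bminus_def by (rule Max_ge[OF fin mem2])
  then have sig: "ca_sigma r mu < 0" using sigma_val[OF bplus] by simp
  have adj: "adjunction_class r mu vzero"
    unfolding adjunction_class_def characteristic_def
  proof (intro conjI disjI1 ballI)
    show "vzero \<in> Deg r 2" by simp
  next
    fix A' assume "A' \<in> Deg r 2"
    then show "G vzero A' mod 2 = G A' A' mod 2"
      using evn G_sym G_zeroR by (metis Deg_vzero even_iff_mod_2_eq_zero mod_0)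
  next
    show "G vzero vzero > ca_sigma r mu" using G_zeroR[of vzero] sig by simp
  qed
  have "h_c mu vzero A = 1 + G A A div 2"
    unfolding h_c_def using A G_sym G_zeroR by (metis Deg_vzero abs_zero diff_zero)
  moreover have "G A A div 2 \<ge> 0" using A by simp
  ultimately show ?thesis using h_fun_ge[OF adj, of A] by simp
qed

end

theorem mainTheorem10:
  fixes r :: "nat \<Rightarrow> nat" and mu :: cprod
  assumes alg: "cohomology_algebra r mu"
    and bplus: "ca_bplus r mu = 1"
    and chi: "2 * ca_chitilde r mu + 3 * ca_sigma r mu \<ge> 0"
  shows
   "(\<forall>F B. ca_IT r mu = {vzero} \<and> basis_with_gram r mu 2 (two_basis F B) (gram2 0 1 0) \<longrightarrow>
       (\<forall>a b :: int. a \<ge> \<bar>b\<bar> \<and> ca_Gamma mu (lincomb2 a F b B) (lincomb2 a F b B) \<ge> 0 \<longrightarrow>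
          (h_fun r mu (lincomb2 a F b B) < 0 \<longleftrightarrow> a > 1 \<and> b = 0) \<and>
          (h_fun r mu (lincomb2 a F b B) = 0 \<longleftrightarrow> (a \<ge> 1 \<and> b = 1) \<or> (a, b) \<in> {(1, 0), (0, 0)}) \<and>
          (\<not> (a > 1 \<and> b = 0) \<and> \<not> ((a \<ge> 1 \<and> b = 1) \<or> (a, b) \<in> {(1, 0), (0, 0)}) \<longrightarrow>
             h_fun r mu (lincomb2 a F b B) > 0)))
  \<and> (\<forall>F B. ca_b1tilde r mu = 2 \<and> ca_IT r mu = {smul k F | k. True} \<and>
           basis_with_gram r mu 2 (two_basis F B) (gram2 0 1 0) \<longrightarrow>
       (\<forall>a b :: int. (a > 0 \<or> (a = 0 \<and> b \<ge> 0)) \<and>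
                    ca_Gamma mu (lincomb2 a F b B) (lincomb2 a F b B) \<ge> 0 \<longrightarrow>
          (h_fun r mu (lincomb2 a F b B) < 0 \<longleftrightarrow> a > 1 \<and> b = 0) \<and>
          (h_fun r mu (lincomb2 a F b B) = 0 \<longleftrightarrow> (a, b) \<in> {(1, 0), (0, 0)}) \<and>
          (\<not> (a > 1 \<and> b = 0) \<and> (a, b) \<notin> {(1, 0), (0, 0)} \<longrightarrow>
             h_fun r mu (lincomb2 a F b B) > 0)))
  \<and> (\<forall>F B. ca_b1tilde r mu = 2 \<and> ca_IT r mu = {smul k F | k. True} \<and>
           basis_with_gram r mu 2 (two_basis F B) (gram2 0 1 1) \<longrightarrow>
       (\<forall>a b :: int. (a > 0 \<or> (a = 0 \<and> b \<ge> 0)) \<and>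
                    ca_Gamma mu (lincomb2 a F b B) (lincomb2 a F b B) \<ge> 0 \<longrightarrow>
          (h_fun r mu (lincomb2 a F b B) < 0 \<longleftrightarrow> a > 1 \<and> b = 0) \<and>
          (h_fun r mu (lincomb2 a F b B) = 0 \<longleftrightarrow> (a, b) \<in> {(1, 0), (0, 0)}) \<and>
          (\<not> (a > 1 \<and> b = 0) \<and> (a, b) \<notin> {(1, 0), (0, 0)} \<longrightarrow>
             h_fun r mu (lincomb2 a F b B) > 0)))
  \<and> (\<forall>e. ca_IT r mu = {vzero} \<and> basis_with_gram r mu 10 e U_minus_E8 \<longrightarrow>
       (\<forall>A\<in>Deg r 2. A \<noteq> vzero \<and> ca_Gamma mu A A \<ge> 0 \<longrightarrow> h_fun r mu A > 0))"
proof -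
  interpret CA r mu by (rule CA.intro) (rule alg)
  have P1: "\<forall>F B. ca_IT r mu = {vzero} \<and> basis_with_gram r mu 2 (two_basis F B) (gram2 0 1 0) \<longrightarrow>
       (\<forall>a b :: int. a \<ge> \<bar>b\<bar> \<and> ca_Gamma mu (lincomb2 a F b B) (lincomb2 a F b B) \<ge> 0 \<longrightarrow>
          (h_fun r mu (lincomb2 a F b B) < 0 \<longleftrightarrow> a > 1 \<and> b = 0) \<and>
          (h_fun r mu (lincomb2 a F b B) = 0 \<longleftrightarrow> (a \<ge> 1 \<and> b = 1) \<or> (a, b) \<in> {(1, 0), (0, 0)}) \<and>
          (\<not> (a > 1 \<and> b = 0) \<and> \<not> ((a \<ge> 1 \<and> b = 1) \<or> (a, b) \<in> {(1, 0), (0, 0)}) \<longrightarrow>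
             h_fun r mu (lincomb2 a F b B) > 0))"
  proof (intro allI impI)
    fix F B a b
    assume h1: "ca_IT r mu = {vzero} \<and> basis_with_gram r mu 2 (two_basis F B) (gram2 0 1 0)"
      and h2: "a \<ge> \<bar>b\<bar> \<and> ca_Gamma mu (lincomb2 a F b B) (lincomb2 a F b B) \<ge> 0"
    show "(h_fun r mu (lincomb2 a F b B) < 0 \<longleftrightarrow> a > 1 \<and> b = 0) \<and>
          (h_fun r mu (lincomb2 a F b B) = 0 \<longleftrightarrow> (a \<ge> 1 \<and> b = 1) \<or> (a, b) \<in> {(1, 0), (0, 0)}) \<and>
          (\<not> (a > 1 \<and> b = 0) \<and> \<not> ((a \<ge> 1 \<and> b = 1) \<or> (a, b) \<in> {(1, 0), (0, 0)}) \<longrightarrow>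
             h_fun r mu (lincomb2 a F b B) > 0)"
      using h1 h2 by (intro case1[OF bplus]) auto
  qed
  have P3: "\<forall>F B. ca_b1tilde r mu = 2 \<and> ca_IT r mu = {smul k F | k. True} \<and>
           basis_with_gram r mu 2 (two_basis F B) (gram2 0 1 0) \<longrightarrow>
       (\<forall>a b :: int. (a > 0 \<or> (a = 0 \<and> b \<ge> 0)) \<and>
                    ca_Gamma mu (lincomb2 a F b B) (lincomb2 a F b B) \<ge> 0 \<longrightarrow>
          (h_fun r mu (lincomb2 a F b B) < 0 \<longleftrightarrow> a > 1 \<and> b = 0) \<and>
          (h_fun r mu (lincomb2 a F b B) = 0 \<longleftrightarrow> (a, b) \<in> {(1, 0), (0, 0)}) \<and>
          (\<not> (a > 1 \<and> b = 0) \<and> (a, b) \<notin> {(1, 0), (0, 0)} \<longrightarrow>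
             h_fun r mu (lincomb2 a F b B) > 0))"
  proof (intro allI impI)
    fix F B a b
    assume h1: "ca_b1tilde r mu = 2 \<and> ca_IT r mu = {smul k F | k. True} \<and>
           basis_with_gram r mu 2 (two_basis F B) (gram2 0 1 0)"
      and h2: "(a > 0 \<or> (a = 0 \<and> b \<ge> 0)) \<and> ca_Gamma mu (lincomb2 a F b B) (lincomb2 a F b B) \<ge> 0"
    show "(h_fun r mu (lincomb2 a F b B) < 0 \<longleftrightarrow> a > 1 \<and> b = 0) \<and>
          (h_fun r mu (lincomb2 a F b B) = 0 \<longleftrightarrow> (a, b) \<in> {(1, 0), (0, 0)}) \<and>
          (\<not> (a > 1 \<and> b = 0) \<and> (a, b) \<notin> {(1, 0), (0, 0)} \<longrightarrow>
             h_fun r mu (lincomb2 a F b B) > 0)"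
      using h1 h2 by (intro case3[OF bplus]) auto
  qed
  have P5: "\<forall>F B. ca_b1tilde r mu = 2 \<and> ca_IT r mu = {smul k F | k. True} \<and>
           basis_with_gram r mu 2 (two_basis F B) (gram2 0 1 1) \<longrightarrow>
       (\<forall>a b :: int. (a > 0 \<or> (a = 0 \<and> b \<ge> 0)) \<and>
                    ca_Gamma mu (lincomb2 a F b B) (lincomb2 a F b B) \<ge> 0 \<longrightarrow>
          (h_fun r mu (lincomb2 a F b B) < 0 \<longleftrightarrow> a > 1 \<and> b = 0) \<and>
          (h_fun r mu (lincomb2 a F b B) = 0 \<longleftrightarrow> (a, b) \<in> {(1, 0), (0, 0)}) \<and>
          (\<not> (a > 1 \<and> b = 0) \<and> (a, b) \<notin> {(1, 0), (0, 0)} \<longrightarrow>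
             h_fun r mu (lincomb2 a F b B) > 0))"
  proof (intro allI impI)
    fix F B a b
    assume h1: "ca_b1tilde r mu = 2 \<and> ca_IT r mu = {smul k F | k. True} \<and>
           basis_with_gram r mu 2 (two_basis F B) (gram2 0 1 1)"
      and h2: "(a > 0 \<or> (a = 0 \<and> b \<ge> 0)) \<and> ca_Gamma mu (lincomb2 a F b B) (lincomb2 a F b B) \<ge> 0"
    show "(h_fun r mu (lincomb2 a F b B) < 0 \<longleftrightarrow> a > 1 \<and> b = 0) \<and>
          (h_fun r mu (lincomb2 a F b B) = 0 \<longleftrightarrow> (a, b) \<in> {(1, 0), (0, 0)}) \<and>
          (\<not> (a > 1 \<and> b = 0) \<and> (a, b) \<notin> {(1, 0), (0, 0)} \<longrightarrow>
             h_fun r mu (lincomb2 a F b B) > 0)"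
      using h1 h2 by (intro case5[OF bplus]) auto
  qed
  have P2: "\<forall>e. ca_IT r mu = {vzero} \<and> basis_with_gram r mu 10 e U_minus_E8 \<longrightarrow>
       (\<forall>A\<in>Deg r 2. A \<noteq> vzero \<and> ca_Gamma mu A A \<ge> 0 \<longrightarrow> h_fun r mu A > 0)"
  proof (intro allI impI ballI)
    fix e A
    assume h1: "ca_IT r mu = {vzero} \<and> basis_with_gram r mu 10 e U_minus_E8"
      and h2: "A \<in> Deg r 2" and h3: "A \<noteq> vzero \<and> ca_Gamma mu A A \<ge> 0"
    show "h_fun r mu A > 0" using h1 h2 h3 by (intro case2[OF bplus]) auto
  qed
  show ?thesis using P1 P3 P5 P2 by (intro conjI)
qed

end
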